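(* Let $\Gamma$ be a connected $\mathbb Z$-leg-weighted graph. Then the set of cones $\{c_w : w\in W(\Gamma)\}$ is finite.
   Context: A graph consists of finite sets $V$ (vertices) and $H$ (half-edges), a map $\mathrm{end}\colon H\to V$, an involution $i$ of $H$, a genus $g\colon V\to\mathbb Z_{\ge0}$ and an integer twist $k$. Legs are fixed points of $i$; edges are pairs $\{h,i(h)\}$, $h\ne i(h)$; a directed edge is a non-leg half-edge $h$ from $\mathrm{end}(h)$ to $\mathrm{end}(i(h))$. $\mathrm{val}(v)$ is the number of non-leg half-edges at $v$, $\kappa(v)=2g(v)-2+\mathrm{val}(v)$, and $g(\Gamma)=b_1(\Gamma)+\sum_v g(v)$. A cycle is a closed walk of directed edges repeating no vertex or undirected edge. A weighting is $w\colon H\to\mathbb Z$ with $w(h)+w(i(h))=0$ for $h\ne i(h)$ and $\sum_{\mathrm{end}(h)=v}w(h)+k\kappa(v)=0$ for all $v$. A leg-weighted graph has given integer values on the legs summing to $-k(2g(\Gamma)-2)$; $W(\Gamma)$ is the set of weightings restricting to these values. For a directed edge $e$ of a cycle $\gamma$, $w_\gamma(e)$ is the value of $w$ on the half-edge of $e$ at its source. For $E$ the edge set, $c_w\subseteq\mathbb Q_{\ge0}^E$ is the cone of $t$ with $\sum_{e\in\gamma}w_\gamma(e)t(e)=0$ for every cycle $\gamma$. *)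

theory Defs
  imports Complex_Main
begin

text \<open>A graph: vertex set V, half-edge set H, end map endp, involution iv on H,
  genus gv on vertices, twist k.\<close>

definition is_graph :: "'v set \<Rightarrow> 'h set \<Rightarrow> ('h \<Rightarrow> 'v) \<Rightarrow> ('h \<Rightarrow> 'h) \<Rightarrow> bool" where
  "is_graph V H endp iv \<longleftrightarrow> finite V \<and> finite H \<and> (\<forall>h\<in>H. endp h \<in> V)
     \<and> (\<forall>h\<in>H. iv h \<in> H \<and> iv (iv h) = h)"

definition legs :: "'h set \<Rightarrow> ('h \<Rightarrow> 'h) \<Rightarrow> 'h set" where
  "legs H iv = {h\<in>H. iv h = h}"

definition edges :: "'h set \<Rightarrow> ('h \<Rightarrow> 'h) \<Rightarrow> 'h set set" where
  "edges H iv = {{h, iv h} | h. h \<in> H \<and> iv h \<noteq> h}"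

definition val :: "'h set \<Rightarrow> ('h \<Rightarrow> 'v) \<Rightarrow> ('h \<Rightarrow> 'h) \<Rightarrow> 'v \<Rightarrow> nat" where
  "val H endp iv v = card {h\<in>H. endp h = v \<and> iv h \<noteq> h}"

definition kappa :: "'h set \<Rightarrow> ('h \<Rightarrow> 'v) \<Rightarrow> ('h \<Rightarrow> 'h) \<Rightarrow> ('v \<Rightarrow> nat) \<Rightarrow> 'v \<Rightarrow> int" where
  "kappa H endp iv gv v = 2 * int (gv v) - 2 + int (val H endp iv v)"

definition adj :: "'h set \<Rightarrow> ('h \<Rightarrow> 'v) \<Rightarrow> ('h \<Rightarrow> 'h) \<Rightarrow> ('v \<times> 'v) set" where
  "adj H endp iv = {(endp h, endp (iv h)) | h. h \<in> H \<and> iv h \<noteq> h}"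

definition connected_graph :: "'v set \<Rightarrow> 'h set \<Rightarrow> ('h \<Rightarrow> 'v) \<Rightarrow> ('h \<Rightarrow> 'h) \<Rightarrow> bool" where
  "connected_graph V H endp iv \<longleftrightarrow> V \<noteq> {} \<and> (\<forall>u\<in>V. \<forall>v\<in>V. (u, v) \<in> (adj H endp iv)\<^sup>*)"

definition n_components :: "'v set \<Rightarrow> 'h set \<Rightarrow> ('h \<Rightarrow> 'v) \<Rightarrow> ('h \<Rightarrow> 'h) \<Rightarrow> nat" where
  "n_components V H endp iv = card (V // ((adj H endp iv)\<^sup>* \<inter> V \<times> V))"

definition betti1 :: "'v set \<Rightarrow> 'h set \<Rightarrow> ('h \<Rightarrow> 'v) \<Rightarrow> ('h \<Rightarrow> 'h) \<Rightarrow> int" where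
  "betti1 V H endp iv = int (card (edges H iv)) - int (card V) + int (n_components V H endp iv)"

definition graph_genus :: "'v set \<Rightarrow> 'h set \<Rightarrow> ('h \<Rightarrow> 'v) \<Rightarrow> ('h \<Rightarrow> 'h) \<Rightarrow> ('v \<Rightarrow> nat) \<Rightarrow> int" where
  "graph_genus V H endp iv gv = betti1 V H endp iv + (\<Sum>v\<in>V. int (gv v))"

definition leg_weighted :: "'v set \<Rightarrow> 'h set \<Rightarrow> ('h \<Rightarrow> 'v) \<Rightarrow> ('h \<Rightarrow> 'h) \<Rightarrow> ('v \<Rightarrow> nat) \<Rightarrow> int
    \<Rightarrow> ('h \<Rightarrow> int) \<Rightarrow> bool" where
  "leg_weighted V H endp iv gv k lw \<longleftrightarrow>
     (\<Sum>h\<in>legs H iv. lw h) = - k * (2 * graph_genus V H endp iv gv - 2)"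

definition is_weighting :: "'v set \<Rightarrow> 'h set \<Rightarrow> ('h \<Rightarrow> 'v) \<Rightarrow> ('h \<Rightarrow> 'h) \<Rightarrow> ('v \<Rightarrow> nat) \<Rightarrow> int
    \<Rightarrow> ('h \<Rightarrow> int) \<Rightarrow> bool" where
  "is_weighting V H endp iv gv k w \<longleftrightarrow>
     (\<forall>h\<in>H. iv h \<noteq> h \<longrightarrow> w h + w (iv h) = 0) \<and>
     (\<forall>v\<in>V. (\<Sum>h\<in>{h\<in>H. endp h = v}. w h) + k * kappa H endp iv gv v = 0)"

definition weightings :: "'v set \<Rightarrow> 'h set \<Rightarrow> ('h \<Rightarrow> 'v) \<Rightarrow> ('h \<Rightarrow> 'h) \<Rightarrow> ('v \<Rightarrow> nat) \<Rightarrow> int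
    \<Rightarrow> ('h \<Rightarrow> int) \<Rightarrow> ('h \<Rightarrow> int) set" where
  "weightings V H endp iv gv k lw =
     {w. is_weighting V H endp iv gv k w \<and> (\<forall>h\<in>legs H iv. w h = lw h)}"

text \<open>A cycle: a nonempty list of directed edges (non-leg half-edges, each at its source),
  consecutive (cyclically), with no repeated vertex and no repeated undirected edge.\<close>
definition is_cycle :: "'h set \<Rightarrow> ('h \<Rightarrow> 'v) \<Rightarrow> ('h \<Rightarrow> 'h) \<Rightarrow> 'h list \<Rightarrow> bool" where
  "is_cycle H endp iv c \<longleftrightarrow> c \<noteq> [] \<and> set c \<subseteq> H \<and> (\<forall>h\<in>set c. iv h \<noteq> h) \<and>
     (\<forall>j<length c. endp (iv (c ! j)) = endp (c ! ((j + 1) mod length c))) \<and>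
     distinct (map endp c) \<and> distinct (map (\<lambda>h. {h, iv h}) c)"

text \<open>The cone c_w in Q_{>=0}^E; elements are functions on undirected edges, zero off E.\<close>
definition cone_w :: "'h set \<Rightarrow> ('h \<Rightarrow> 'v) \<Rightarrow> ('h \<Rightarrow> 'h) \<Rightarrow> ('h \<Rightarrow> int) \<Rightarrow> ('h set \<Rightarrow> rat) set" where
  "cone_w H endp iv w = {t. (\<forall>e. e \<notin> edges H iv \<longrightarrow> t e = 0) \<and> (\<forall>e\<in>edges H iv. 0 \<le> t e) \<and>
     (\<forall>c. is_cycle H endp iv c \<longrightarrow>
        (\<Sum>j<length c. of_int (w (c ! j)) * t {c ! j, iv (c ! j)}) = 0)}"

end

theory Submission
  imports Defs
begin

fun walk :: "('h \<Rightarrow> 'v) \<Rightarrow> ('h \<Rightarrow> 'h) \<Rightarrow> 'v \<Rightarrow> 'h list \<Rightarrow> 'v \<Rightarrow> bool" where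
  "walk e i x [] y = (x = y)"
| "walk e i x (h # p) y = (e h = x \<and> walk e i (e (i h)) p y)"

lemma walk_drop: "walk e i x q y \<Longrightarrow> j < length q \<Longrightarrow> walk e i (e (q ! j)) (drop j q) y"
proof (induction q arbitrary: x j)
  case Nil then show ?case by simp
next
  case (Cons a q)
  then show ?case by (cases j) auto
qed

lemma walk_nth: "walk e i x c y \<Longrightarrow> j < length c \<Longrightarrow>
   e (i (c ! j)) = (if j + 1 < length c then e (c ! (j + 1)) else y)"
proof (induction c arbitrary: x j)
  case Nil then show ?case by simp
next
  case (Cons a q)
  show ?case
  proof (cases j)
    case 0 then show ?thesis using Cons by (cases q) auto
  next
    case (Suc j') then show ?thesis using Cons by auto
  qed
qed

lemma simple_path:
  assumes "(x, y) \<in> {(e h, e (i h)) | h. h \<in> G}\<^sup>*"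
  shows "\<exists>q. walk e i x q y \<and> set q \<subseteq> G \<and> distinct (map e q) \<and> y \<notin> e ` set q"
  using assms
proof (induction rule: converse_rtrancl_induct)
  case base
  then show ?case by (intro exI[of _ "[]"]) simp
next
  case (step x x')
  then obtain h where h: "h \<in> G" "e h = x" "e (i h) = x'" by blast
  from step obtain q where q: "walk e i x' q y" "set q \<subseteq> G" "distinct (map e q)" "y \<notin> e ` set q"
    by blast
  show ?case
  proof (cases "x = y")
    case True then show ?thesis by (intro exI[of _ "[]"]) simp
  next
    case False
    show ?thesis
    proof (cases "x \<in> e ` set q")
      case True
      then obtain j where j: "j < length q" "e (q ! j) = x" by (auto simp: in_set_conv_nth)
      have "walk e i x (drop j q) y" using walk_drop[OF q(1) j(1)] j(2) by simp
      moreover have "set (drop j q) \<subseteq> G" using q(2) set_drop_subset by fastforce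
      moreover have "distinct (map e (drop j q))" using q(3) by (simp add: drop_map[symmetric])
      moreover have "y \<notin> e ` set (drop j q)" using q(4) set_drop_subset by fastforce
      ultimately show ?thesis by blast
    next
      case False2: False
      show ?thesis using h q False False2 by (intro exI[of _ "h # q"]) auto
    qed
  qed
qed

lemma cyc_edge_dup:
  assumes d: "distinct (map endp c)"
    and cons: "\<forall>j<length c. endp (iv (c ! j)) = endp (c ! ((j + 1) mod length c))"
    and inv: "\<forall>h\<in>set c. iv (iv h) = h"
    and ij: "i < length c" "j < length c" "i \<noteq> j"
    and eq: "{c ! i, iv (c ! i)} = {c ! j, iv (c ! j)}"
  shows "length c = 2 \<and> c ! j = iv (c ! i)"
proof -
  let ?n = "length c"
  have idx: "\<And>a b. a < ?n \<Longrightarrow> b < ?n \<Longrightarrow> endp (c ! a) = endp (c ! b) \<Longrightarrow> a = b"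
    using d by (metis length_map nth_eq_iff_index_eq nth_map)
  have "c ! j = c ! i \<or> c ! j = iv (c ! i)" using eq by blast
  moreover have "c ! j \<noteq> c ! i" using idx ij by metis
  ultimately have cj: "c ! j = iv (c ! i)" by blast
  have ci: "iv (c ! j) = c ! i" using cj inv ij by auto
  have n0: "?n > 0" using ij by linarith
  have "endp (c ! j) = endp (c ! ((i + 1) mod ?n))" using cons ij(1) cj by simp
  moreover have "(i + 1) mod ?n < ?n" using n0 by simp
  ultimately have j1: "j = (i + 1) mod ?n" using idx[OF ij(2)] by blast
  have "endp (c ! i) = endp (iv (c ! j))" using ci by simp
  also have "\<dots> = endp (c ! ((j + 1) mod ?n))" using cons ij(2) by blast
  finally have "endp (c ! i) = endp (c ! ((j + 1) mod ?n))" .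
  moreover have "(j + 1) mod ?n < ?n" using n0 by simp
  ultimately have i1: "i = (j + 1) mod ?n" using idx[OF ij(1)] by blast
  have n2: "?n = 2"
  proof (cases "i + 1 < ?n")
    case True
    hence jj: "j = i + 1" using j1 by simp
    show ?thesis
    proof (cases "i + 2 < ?n")
      case True
      hence "(j + 1) mod ?n = j + 1" using jj by (intro mod_less) simp
      then show ?thesis using i1 jj by linarith
    next
      case False
      hence "j + 1 = ?n" using jj True by simp
      hence "(j + 1) mod ?n = 0" by simp
      hence "i = 0" using i1 by linarith
      then show ?thesis using \<open>j + 1 = ?n\<close> jj by simp
    qed
  next
    case False
    hence "i + 1 = ?n" using ij by simp
    hence "(i + 1) mod ?n = 0" by simp
    hence "j = 0" using j1 by linarith
    hence "i = 1 mod ?n" using i1 by (metis add_0)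
    moreover have "?n \<noteq> 1" using ij \<open>j = 0\<close> by linarith
    hence "1 mod ?n = 1" using n0 by (intro mod_less) linarith
    ultimately show ?thesis using \<open>i + 1 = ?n\<close> by linarith
  qed
  show ?thesis using n2 cj by simp
qed


definition bnd :: "'v set \<Rightarrow> 'h set \<Rightarrow> ('h \<Rightarrow> 'v) \<Rightarrow> ('h \<Rightarrow> 'h) \<Rightarrow> ('v \<Rightarrow> nat) \<Rightarrow> int
    \<Rightarrow> ('h \<Rightarrow> int) \<Rightarrow> int" where
  "bnd V H endp iv gv k lw = (\<Sum>v\<in>V. \<bar>k * kappa H endp iv gv v\<bar>) + (\<Sum>h\<in>legs H iv. \<bar>lw h\<bar>)"

lemma bnd_nonneg: "0 \<le> bnd V H endp iv gv k lw"
  unfolding bnd_def by (intro add_nonneg_nonneg sum_nonneg) auto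

lemma lemmaA:
  assumes G: "is_graph V H endp iv"
    and W: "w \<in> weightings V H endp iv gv k lw"
    and T: "t \<in> cone_w H endp iv w"
    and h0: "h0 \<in> H" "iv h0 \<noteq> h0" "0 < of_int (w h0) * t {h0, iv h0}"
  shows "w h0 \<le> bnd V H endp iv gv k lw"
proof (rule ccontr)
  assume big: "\<not> w h0 \<le> bnd V H endp iv gv k lw"
  let ?B = "bnd V H endp iv gv k lw"
  have fV: "finite V" and fH: "finite H" and eV: "\<forall>h\<in>H. endp h \<in> V"
    and ivH: "\<forall>h\<in>H. iv h \<in> H \<and> iv (iv h) = h" using G by (auto simp: is_graph_def)
  have wanti: "\<forall>h\<in>H. iv h \<noteq> h \<longrightarrow> w h + w (iv h) = 0"
    and wvert: "\<forall>v\<in>V. (\<Sum>h\<in>{h\<in>H. endp h = v}. w h) + k * kappa H endp iv gv v = 0"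
    and wleg: "\<forall>h\<in>legs H iv. w h = lw h"
    using W by (auto simp: weightings_def is_weighting_def)
  have tnn: "\<And>h. h \<in> H \<Longrightarrow> iv h \<noteq> h \<Longrightarrow> 0 \<le> t {h, iv h}"
    using T by (auto simp: cone_w_def edges_def)
  have tcyc: "\<And>c. is_cycle H endp iv c \<Longrightarrow>
        (\<Sum>j<length c. of_int (w (c ! j)) * t {c ! j, iv (c ! j)}) = 0"
    using T by (auto simp: cone_w_def)
  define G' where "G' = {h\<in>H. iv h \<noteq> h \<and> 0 \<le> (of_int (w h) :: rat) * t {h, iv h}}"
  define R where "R = {(endp h, endp (iv h)) | h. h \<in> G'}"
  define x0 where "x0 = endp (iv h0)"
  define U where "U = R\<^sup>* `` {x0}"
  have x0U: "x0 \<in> U" unfolding U_def by simp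
  have closed: "\<And>h. h \<in> G' \<Longrightarrow> endp h \<in> U \<Longrightarrow> endp (iv h) \<in> U"
    unfolding U_def R_def by (auto intro: rtrancl_into_rtrancl)
  have wiv0: "w (iv h0) = - w h0" using wanti h0 by force
  have notin: "endp h0 \<notin> U"
  proof
    assume "endp h0 \<in> U"
    hence "(x0, endp h0) \<in> R\<^sup>*" unfolding U_def by simp
    then obtain q where q: "walk endp iv x0 q (endp h0)" "set q \<subseteq> G'" "distinct (map endp q)"
        "endp h0 \<notin> endp ` set q"
      using simple_path[of x0 "endp h0" endp iv G'] unfolding R_def by blast
    define c where "c = h0 # q"
    have wc: "walk endp iv (endp h0) c (endp h0)" using q(1) unfolding c_def x0_def by simp
    have qH: "set q \<subseteq> H" "\<forall>h\<in>set q. iv h \<noteq> h" using q(2) unfolding G'_def by auto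
    have cons: "\<forall>j<length c. endp (iv (c ! j)) = endp (c ! ((j + 1) mod length c))"
    proof (intro allI impI)
      fix j assume j: "j < length c"
      show "endp (iv (c ! j)) = endp (c ! ((j + 1) mod length c))"
      proof (cases "j + 1 < length c")
        case True then show ?thesis using walk_nth[OF wc j] by simp
      next
        case False
        hence "j + 1 = length c" using j by simp
        then show ?thesis using walk_nth[OF wc j] by (simp add: c_def)
      qed
    qed
    have dc: "distinct (map endp c)" using q(3,4) by (simp add: c_def)
    have inv: "\<forall>h\<in>set c. iv (iv h) = h" using ivH qH h0 by (auto simp: c_def)
    have de: "distinct (map (\<lambda>h. {h, iv h}) c)"
    proof (rule ccontr)
      assume "\<not> distinct (map (\<lambda>h. {h, iv h}) c)"
      then obtain i j where ij: "i < length c" "j < length c" "i \<noteq> j"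
        and eq: "{c ! i, iv (c ! i)} = {c ! j, iv (c ! j)}"
        by (auto simp: distinct_conv_nth)
      from cyc_edge_dup[OF dc cons inv ij eq]
      have l2: "length c = 2" and cj: "c ! j = iv (c ! i)" by auto
      then obtain q0 where qq: "q = [q0]" unfolding c_def by (cases q) auto
      have "q0 = iv h0"
      proof -
        have "(i = 0 \<and> j = 1) \<or> (i = 1 \<and> j = 0)" using ij l2 by auto
        then show ?thesis using cj qq h0 ivH inv by (auto simp: c_def)
      qed
      hence "iv h0 \<in> G'" using q(2) qq by simp
      hence "0 \<le> (of_int (w (iv h0)) :: rat) * t {iv h0, iv (iv h0)}" unfolding G'_def by simp
      moreover have "{iv h0, iv (iv h0)} = {h0, iv h0}" using ivH h0 by auto
      ultimately show False using wiv0 h0(3) by simp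
    qed
    have isc: "is_cycle H endp iv c"
      unfolding is_cycle_def using qH h0 cons dc de by (auto simp: c_def)
    have "(\<Sum>j<length c. (of_int (w (c ! j)) :: rat) * t {c ! j, iv (c ! j)})
        = of_int (w h0) * t {h0, iv h0} + (\<Sum>j<length q. of_int (w (q ! j)) * t {q ! j, iv (q ! j)})"
      unfolding c_def by (simp only: length_Cons sum.lessThan_Suc_shift nth_Cons_0 nth_Cons_Suc)
    moreover have "0 \<le> (\<Sum>j<length q. (of_int (w (q ! j)) :: rat) * t {q ! j, iv (q ! j)})"
      using q(2) by (intro sum_nonneg) (auto simp: G'_def dest!: nth_mem)
    ultimately have "0 < (\<Sum>j<length c. (of_int (w (c ! j)) :: rat) * t {c ! j, iv (c ! j)})"
      using h0(3) by linarith
    then show False using tcyc[OF isc] by simp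
  qed
  have UV: "U \<subseteq> V"
  proof
    fix u assume "u \<in> U"
    hence "(x0, u) \<in> R\<^sup>*" unfolding U_def by simp
    then show "u \<in> V"
    proof (induction rule: rtrancl_induct)
      case base then show ?case using eV ivH h0 x0_def by auto
    next
      case (step y z) then show ?case using eV ivH unfolding R_def G'_def by auto
    qed
  qed
  define A where "A = {h\<in>H. endp h \<in> U}"
  define L where "L = {h\<in>A. iv h = h}"
  define I where "I = {h\<in>A. iv h \<noteq> h \<and> endp (iv h) \<in> U}"
  define Ou where "Ou = {h\<in>A. iv h \<noteq> h \<and> endp (iv h) \<notin> U}"
  have fA: "finite A" using fH unfolding A_def by simp
  have fL: "finite L" "finite I" "finite Ou" using fA unfolding L_def I_def Ou_def by auto
  have split: "sum w A = sum w L + sum w I + sum w Ou"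
  proof -
    have "A = L \<union> (I \<union> Ou)" unfolding L_def I_def Ou_def by auto
    moreover have "L \<inter> (I \<union> Ou) = {}" "I \<inter> Ou = {}" unfolding L_def I_def Ou_def by auto
    ultimately show ?thesis using fL by (simp add: sum.union_disjoint)
  qed
  have sA: "sum w A = (\<Sum>v\<in>U. - k * kappa H endp iv gv v)"
  proof -
    have "sum w A = (\<Sum>v\<in>U. sum w {h\<in>A. endp h = v})"
    proof -
      have "endp ` A \<subseteq> U" unfolding A_def by auto
      from sum.group[OF fA finite_subset[OF UV fV] this, of w] show ?thesis by simp
    qed
    also have "\<dots> = (\<Sum>v\<in>U. sum w {h\<in>H. endp h = v})"
      by (intro sum.cong) (auto simp: A_def intro!: arg_cong[where f="sum w"])
    also have "\<dots> = (\<Sum>v\<in>U. - k * kappa H endp iv gv v)"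
      using wvert UV by (intro sum.cong) (auto simp: algebra_simps eq_neg_iff_add_eq_0)
    finally show ?thesis .
  qed
  have sI: "sum w I = 0"
  proof -
    have bij: "bij_betw iv I I"
      by (rule bij_betw_byWitness[where f'=iv]) (use ivH in \<open>auto simp: I_def A_def\<close>)
    have "sum w I = sum (\<lambda>h. w (iv h)) I" using sum.reindex_bij_betw[OF bij, of w] by simp
    also have "\<dots> = sum (\<lambda>h. - w h) I"
      using wanti by (intro sum.cong) (auto simp: I_def A_def eq_neg_iff_add_eq_0 add.commute)
    finally show ?thesis by (simp add: sum_negf)
  qed
  have sL: "sum w L = sum lw L"
    using wleg by (intro sum.cong) (auto simp: L_def A_def legs_def)
  have b1: "\<bar>\<Sum>v\<in>U. - k * kappa H endp iv gv v\<bar> \<le> (\<Sum>v\<in>V. \<bar>k * kappa H endp iv gv v\<bar>)"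
  proof -
    have "\<bar>\<Sum>v\<in>U. - k * kappa H endp iv gv v\<bar> \<le> (\<Sum>v\<in>U. \<bar>k * kappa H endp iv gv v\<bar>)"
      using sum_abs[of "\<lambda>v. - k * kappa H endp iv gv v" U] by simp
    also have "\<dots> \<le> (\<Sum>v\<in>V. \<bar>k * kappa H endp iv gv v\<bar>)"
      by (rule sum_mono2[OF fV UV]) auto
    finally show ?thesis .
  qed
  have b2: "\<bar>sum lw L\<bar> \<le> (\<Sum>h\<in>legs H iv. \<bar>lw h\<bar>)"
  proof -
    have "\<bar>sum lw L\<bar> \<le> (\<Sum>h\<in>L. \<bar>lw h\<bar>)" by (rule sum_abs)
    also have "\<dots> \<le> (\<Sum>h\<in>legs H iv. \<bar>lw h\<bar>)"
      by (rule sum_mono2) (use fH in \<open>auto simp: L_def A_def legs_def\<close>)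
    finally show ?thesis .
  qed
  have sO: "sum w Ou = (\<Sum>v\<in>U. - k * kappa H endp iv gv v) - sum lw L"
    using split sA sI sL by linarith
  have lowO: "- ?B \<le> sum w Ou" using sO b1 b2 unfolding bnd_def by linarith
  have iv0O: "iv h0 \<in> Ou" using ivH h0 x0U notin unfolding Ou_def A_def x0_def by auto
  have negO: "\<And>h. h \<in> Ou \<Longrightarrow> w h \<le> 0"
  proof -
    fix h assume hO: "h \<in> Ou"
    have "h \<notin> G'" using closed hO unfolding Ou_def A_def by auto
    hence "(of_int (w h) :: rat) * t {h, iv h} < 0" using hO unfolding G'_def Ou_def A_def by auto
    moreover have "0 \<le> t {h, iv h}" using tnn hO unfolding Ou_def A_def by auto
    ultimately show "w h \<le> 0"
    proof -
      assume a: "(of_int (w h) :: rat) * t {h, iv h} < 0" "0 \<le> t {h, iv h}"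
      show "w h \<le> 0"
      proof (rule ccontr)
        assume "\<not> w h \<le> 0"
        hence "(0::rat) \<le> of_int (w h)" by simp
        hence "0 \<le> (of_int (w h) :: rat) * t {h, iv h}" using a(2) by (rule mult_nonneg_nonneg)
        then show False using a(1) by simp
      qed
    qed
  qed
  have "sum w Ou = w (iv h0) + sum w (Ou - {iv h0})"
    using fL(3) iv0O by (simp add: sum.remove)
  also have "\<dots> \<le> w (iv h0)"
  proof -
    have "sum w (Ou - {iv h0}) \<le> 0" by (rule sum_nonpos) (use negO in blast)
    then show ?thesis by simp
  qed
  finally have "sum w Ou \<le> - w h0" using wiv0 by simp
  then show False using lowO big by linarith
qed

lemma absbound:
  assumes G: "is_graph V H endp iv"
    and W: "w \<in> weightings V H endp iv gv k lw"
    and T: "t \<in> cone_w H endp iv w"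
    and h: "h \<in> H" "iv h \<noteq> h" "B < \<bar>w h\<bar>"
    and Bdef: "B = bnd V H endp iv gv k lw"
  shows "t {h, iv h} = 0"
proof (rule ccontr)
  assume nz: "t {h, iv h} \<noteq> 0"
  have ivH: "iv h \<in> H" "iv (iv h) = h" using G h by (auto simp: is_graph_def)
  have wanti: "w h + w (iv h) = 0" using W h by (auto simp: weightings_def is_weighting_def)
  have tnn: "0 \<le> t {h, iv h}" using T h by (auto simp: cone_w_def edges_def)
  hence tp: "0 < t {h, iv h}" using nz by simp
  have B0: "0 \<le> B" using bnd_nonneg Bdef by simp
  show False
  proof (cases "0 < w h")
    case True
    hence "0 < (of_int (w h) :: rat) * t {h, iv h}" using tp by simp
    from lemmaA[OF G W T h(1,2) this] True h(3) Bdef show False by simp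
  next
    case False
    hence neg: "w h < 0" using h(3) B0 by simp
    have e: "{iv h, iv (iv h)} = {h, iv h}" using ivH by auto
    have "0 < (of_int (w (iv h)) :: rat) * t {iv h, iv (iv h)}"
      using tp neg wanti e by (simp add: eq_neg_iff_add_eq_0 add.commute)
    from lemmaA[OF G W T ivH(1) _ this] ivH h(2) have "w (iv h) \<le> bnd V H endp iv gv k lw" by simp
    then show False using neg wanti h(3) Bdef by simp
  qed
qed

theorem lemma3p8:
  fixes V :: "'v set" and H :: "'h set" and endp :: "'h \<Rightarrow> 'v" and iv :: "'h \<Rightarrow> 'h"
    and gv :: "'v \<Rightarrow> nat" and k :: int and lw :: "'h \<Rightarrow> int"
  assumes "is_graph V H endp iv"
    and "connected_graph V H endp iv"
    and "leg_weighted V H endp iv gv k lw"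
  shows "finite ((\<lambda>w. cone_w H endp iv w) ` weightings V H endp iv gv k lw)"
proof -
  note G = assms(1)
  define B where "B = bnd V H endp iv gv k lw"
  have B0: "0 \<le> B" using bnd_nonneg B_def by simp
  have fH: "finite H" using G by (simp add: is_graph_def)
  define Fs where "Fs = {f :: 'h \<Rightarrow> int. \<forall>h. (h \<in> H \<longrightarrow> f h \<in> {-B..B}) \<and> (h \<notin> H \<longrightarrow> f h = 0)}"
  define F where "F = (\<lambda>(f :: 'h \<Rightarrow> int, S :: 'h set). {t :: 'h set \<Rightarrow> rat.
      (\<forall>e. e \<notin> edges H iv \<longrightarrow> t e = 0) \<and> (\<forall>e\<in>edges H iv. 0 \<le> t e) \<and>
      (\<forall>h\<in>S. t {h, iv h} = 0) \<and>
      (\<forall>c. is_cycle H endp iv c \<longrightarrow>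
        (\<Sum>j<length c. of_int (f (c ! j)) * t {c ! j, iv (c ! j)}) = 0)})"
  have fin: "finite (F ` (Fs \<times> Pow H))"
    unfolding Fs_def using fH
    by (intro finite_imageI finite_cartesian_product finite_set_of_finite_funs) auto
  have "(\<lambda>w. cone_w H endp iv w) ` weightings V H endp iv gv k lw \<subseteq> F ` (Fs \<times> Pow H)"
  proof
    fix C assume "C \<in> (\<lambda>w. cone_w H endp iv w) ` weightings V H endp iv gv k lw"
    then obtain w where W: "w \<in> weightings V H endp iv gv k lw" and C: "C = cone_w H endp iv w"
      by blast
    define f where "f = (\<lambda>h. if h \<in> H \<and> \<bar>w h\<bar> \<le> B then w h else 0)"
    define S where "S = {h\<in>H. iv h \<noteq> h \<and> B < \<bar>w h\<bar>}"
    have fFs: "(f, S) \<in> Fs \<times> Pow H" using B0 unfolding f_def S_def Fs_def by auto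
    have termeq: "of_int (w a) * t {a, iv a} = of_int (f a) * t {a, iv a}"
      if "a \<in> H" "iv a \<noteq> a" "a \<in> S \<longrightarrow> t {a, iv a} = 0" for a and t :: "'h set \<Rightarrow> rat"
      using that unfolding f_def S_def by auto
    have cyc_el: "c ! j \<in> H \<and> iv (c ! j) \<noteq> c ! j"
      if "is_cycle H endp iv c" "j < length c" for c j
      using that unfolding is_cycle_def by (auto dest!: nth_mem)
    have "cone_w H endp iv w = F (f, S)"
    proof (intro set_eqI iffI)
      fix t assume T: "t \<in> cone_w H endp iv w"
      have z: "\<And>a. a \<in> S \<Longrightarrow> t {a, iv a} = 0"
        using absbound[OF G W T _ _ _ B_def] unfolding S_def by blast
      show "t \<in> F (f, S)"
        unfolding F_def
      proof (clarsimp, intro conjI allI impI ballI)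
        show "\<And>e. e \<notin> edges H iv \<Longrightarrow> t e = 0" "\<And>e. e \<in> edges H iv \<Longrightarrow> 0 \<le> t e"
          using T by (auto simp: cone_w_def)
        show "\<And>h. h \<in> S \<Longrightarrow> t {h, iv h} = 0" by (rule z)
        fix c assume isc: "is_cycle H endp iv c"
        have "(\<Sum>j<length c. of_int (f (c ! j)) * t {c ! j, iv (c ! j)})
            = (\<Sum>j<length c. of_int (w (c ! j)) * t {c ! j, iv (c ! j)})"
        proof (rule sum.cong[OF refl])
          fix j assume "j \<in> {..<length c}"
          hence "c ! j \<in> H" "iv (c ! j) \<noteq> c ! j" using cyc_el[OF isc] by auto
          from termeq[OF this, of t] z show "of_int (f (c ! j)) * t {c ! j, iv (c ! j)} = of_int (w (c ! j)) * t {c ! j, iv (c ! j)}" by auto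
        qed
        also have "\<dots> = 0" using T isc by (auto simp: cone_w_def)
        finally show "(\<Sum>j<length c. of_int (f (c ! j)) * t {c ! j, iv (c ! j)}) = 0" .
      qed
    next
      fix t assume T: "t \<in> F (f, S)"
      have z: "\<And>a. a \<in> S \<Longrightarrow> t {a, iv a} = 0" using T unfolding F_def by auto
      show "t \<in> cone_w H endp iv w"
        unfolding cone_w_def
      proof (clarsimp, intro conjI allI impI ballI)
        show "\<And>e. e \<notin> edges H iv \<Longrightarrow> t e = 0" "\<And>e. e \<in> edges H iv \<Longrightarrow> 0 \<le> t e"
          using T by (auto simp: F_def)
        fix c assume isc: "is_cycle H endp iv c"
        have "(\<Sum>j<length c. of_int (w (c ! j)) * t {c ! j, iv (c ! j)})
            = (\<Sum>j<length c. of_int (f (c ! j)) * t {c ! j, iv (c ! j)})"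
        proof (rule sum.cong[OF refl])
          fix j assume "j \<in> {..<length c}"
          hence "c ! j \<in> H" "iv (c ! j) \<noteq> c ! j" using cyc_el[OF isc] by auto
          from termeq[OF this, of t] z show "of_int (w (c ! j)) * t {c ! j, iv (c ! j)} = of_int (f (c ! j)) * t {c ! j, iv (c ! j)}" by auto
        qed
        also have "\<dots> = 0" using T isc by (auto simp: F_def)
        finally show "(\<Sum>j<length c. of_int (w (c ! j)) * t {c ! j, iv (c ! j)}) = 0" .
      qed
    qed
    then show "C \<in> F ` (Fs \<times> Pow H)" using C fFs by blast
  qed
  then show ?thesis using fin by (rule finite_subset)
qed

end
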